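(* Let $0<c<1$ and let $m\in\mathcal P$ be such that $\mathcal F_c(m)=m$ and $m(x,y)\ge|obs(x)-obs(y)|$ for all $x,y\in E$. Then $m\ge\overline\delta^c$ pointwise.
   Context: Standing setting (diffusion): $E$ is a locally compact Hausdorff space with a countable base, equipped with its Borel $\sigma$-algebra and a fixed $1$-bounded metric $\Delta$ generating its topology (so $E$ is Polish). $(P_t)_{t\ge0}$ is a family of Markov kernels on $E$ obtained from a Feller–Dynkin semigroup $(\hat P_t)_{t\ge0}$ on $C_0(E)$ via $\hat P_t f(x)=\int f(y)\,P_t(x,\mathrm dy)$; the process is honest, i.e. $P_t(x,E)=1$ for all $t\ge0,x\in E$, and $P_0(x)=\delta_x$. We write $P_t(x)$ for the probability measure $P_t(x,\cdot)$. $\Omega$ is the space of continuous trajectories $\omega:[0,\infty)\to E$, with the topology of the uniform metric $U(\Delta)(\omega,\omega')=\sup_{t\ge0}\Delta(\omega(t),\omega'(t))$, assumed Polish; for each $x\in E$, $\mathbb P^x$ is the Borel probability measure on $\Omega$ of the canonical process started at $x$ (so $\omega(0)=x$ a.s. and the finite-dimensional distributions are given by the kernels $P_t$; in particular the law of $\omega(t)$ under $\mathbb P^x$ is $P_t(x)$). The map $x\mapsto\mathbb P^x$ is weakly continuous (hence so is $x\mapsto P_t(x)$ for each $t$). A continuous function $obs:E\to[0,1]$ is fixed. Transport: for Borel probability measures $\mu,\nu$ on a Polish space $X$, $\Gamma(\mu,\nu)$ is the set of couplings; for lower semicontinuous $c:X\times X\to[0,1]$, $W(c)(\mu,\nu)=\min_{\gamma\in\Gamma(\mu,\nu)}\int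 c\,\mathrm d\gamma$. Lattices: $\mathcal M$ is the set of $1$-bounded pseudometrics on $E$ ordered pointwise; $\mathcal P\subseteq\mathcal M$ consists of those that are lower semicontinuous as functions $E\times E\to[0,1]$ (for the topology of $\Delta$); $\mathcal C\subseteq\mathcal P$ consists of those that are continuous. Functional: for $0<c\le1$ and $m\in\mathcal P$, $\mathcal F_c(m)(x,y)=\sup_{t\ge0} c^t\,W(m)(P_t(x),P_t(y))$. Sequence: for $0<c<1$, $\delta^c_0(x,y)=|obs(x)-obs(y)|$ and $\delta^c_{n+1}=\mathcal F_c(\delta^c_n)$ (each $\delta^c_n$ lies in $\mathcal C$, since $\mathcal F_c$ maps $\mathcal C$ into $\mathcal C$ for $c<1$, so the recursion is well defined); the sequence is pointwise non-decreasing and $\overline\delta^c=\sup_n\delta^c_n$. *)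

theory Defs
  imports "HOL-Analysis.Analysis" "HOL-Probability.Probability"
begin

definition bounded_generating_metric :: "('a::topological_space \<Rightarrow> 'a \<Rightarrow> real) \<Rightarrow> bool" where
  "bounded_generating_metric D \<longleftrightarrow>
     (\<forall>x y. 0 \<le> D x y \<and> D x y \<le> 1) \<and>
     (\<forall>x y. D x y = 0 \<longleftrightarrow> x = y) \<and>
     (\<forall>x y. D x y = D y x) \<and>
     (\<forall>x y z. D x z \<le> D x y + D y z) \<and>
     (\<forall>S. open S \<longleftrightarrow> (\<forall>x\<in>S. \<exists>e>0. \<forall>y. D x y < e \<longrightarrow> y \<in> S))"

definition C0 :: "('a::topological_space \<Rightarrow> real) set" where
  "C0 = {f. continuous_on UNIV f \<and>
            (\<forall>e>0. \<exists>K. compact K \<and> (\<forall>x. x \<notin> K \<longrightarrow> \<bar>f x\<bar> < e))}"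

definition hatP :: "(real \<Rightarrow> 'a::topological_space \<Rightarrow> 'a measure) \<Rightarrow> real \<Rightarrow> ('a \<Rightarrow> real) \<Rightarrow> 'a \<Rightarrow> real" where
  "hatP P t f x = (\<integral>y. f y \<partial>(P t x))"

definition feller_dynkin_kernels :: "(real \<Rightarrow> 'a::topological_space \<Rightarrow> 'a measure) \<Rightarrow> bool" where
  "feller_dynkin_kernels P \<longleftrightarrow>
     (\<forall>t\<ge>0. \<forall>x. prob_space (P t x) \<and> sets (P t x) = sets borel) \<and>
     (\<forall>t\<ge>0. \<forall>A\<in>sets borel. (\<lambda>x. emeasure (P t x) A) \<in> borel_measurable borel) \<and>
     (\<forall>x. P 0 x = return borel x) \<and>
     (\<forall>s\<ge>0. \<forall>t\<ge>0. \<forall>x. \<forall>A\<in>sets borel.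
         emeasure (P (s + t) x) A = (\<integral>\<^sup>+ y. emeasure (P t y) A \<partial>(P s x))) \<and>
     (\<forall>t\<ge>0. \<forall>f\<in>C0. hatP P t f \<in> C0) \<and>
     (\<forall>f\<in>C0. ((\<lambda>t. SUP x. \<bar>hatP P t f x - f x\<bar>) \<longlongrightarrow> 0) (at_right 0))"

definition weakly_continuous_kernels :: "(real \<Rightarrow> 'a::topological_space \<Rightarrow> 'a measure) \<Rightarrow> bool" where
  "weakly_continuous_kernels P \<longleftrightarrow>
     (\<forall>t\<ge>0. \<forall>f::'a \<Rightarrow> real. continuous_on UNIV f \<longrightarrow> bounded (range f) \<longrightarrow>
        continuous_on UNIV (hatP P t f))"

definition couplings :: "'a::topological_space measure \<Rightarrow> 'a measure \<Rightarrow> ('a \<times> 'a) measure set" where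
  "couplings \<mu> \<nu> = {\<gamma>. prob_space \<gamma> \<and> sets \<gamma> = sets (borel :: ('a \<times> 'a) measure) \<and>
                        distr \<gamma> borel fst = \<mu> \<and> distr \<gamma> borel snd = \<nu>}"

text \<open>W(c)(mu,nu) = min over couplings of the integral of c (the minimum is attained
  for lower semicontinuous c on a Polish space, so it coincides with the infimum).\<close>
definition W :: "('a::topological_space \<Rightarrow> 'a \<Rightarrow> real) \<Rightarrow> 'a measure \<Rightarrow> 'a measure \<Rightarrow> real" where
  "W c \<mu> \<nu> = (INF \<gamma> \<in> couplings \<mu> \<nu>. \<integral>p. c (fst p) (snd p) \<partial>\<gamma>)"

definition pseudometrics1 :: "('a \<Rightarrow> 'a \<Rightarrow> real) set" where
  "pseudometrics1 = {m. (\<forall>x y. 0 \<le> m x y \<and> m x y \<le> 1) \<and> (\<forall>x. m x x = 0) \<and>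
                        (\<forall>x y. m x y = m y x) \<and> (\<forall>x y z. m x z \<le> m x y + m y z)}"

definition lsc :: "('b::topological_space \<Rightarrow> real) \<Rightarrow> bool" where
  "lsc f \<longleftrightarrow> (\<forall>a. open {p. a < f p})"

definition lsc_pseudometrics :: "('a::topological_space \<Rightarrow> 'a \<Rightarrow> real) set" where
  "lsc_pseudometrics = {m \<in> pseudometrics1. lsc (\<lambda>p::'a \<times> 'a. m (fst p) (snd p))}"

definition Fc :: "(real \<Rightarrow> 'a::topological_space \<Rightarrow> 'a measure) \<Rightarrow> real \<Rightarrow>
                  ('a \<Rightarrow> 'a \<Rightarrow> real) \<Rightarrow> 'a \<Rightarrow> 'a \<Rightarrow> real" where
  "Fc P c m x y = (SUP t \<in> {0::real..}. c powr t * W m (P t x) (P t y))"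

primrec delta :: "(real \<Rightarrow> 'a::topological_space \<Rightarrow> 'a measure) \<Rightarrow> ('a \<Rightarrow> real) \<Rightarrow> real \<Rightarrow>
                  nat \<Rightarrow> 'a \<Rightarrow> 'a \<Rightarrow> real" where
  "delta P obs c 0 = (\<lambda>x y. \<bar>obs x - obs y\<bar>)"
| "delta P obs c (Suc n) = Fc P c (delta P obs c n)"

definition delta_bar :: "(real \<Rightarrow> 'a::topological_space \<Rightarrow> 'a measure) \<Rightarrow> ('a \<Rightarrow> real) \<Rightarrow> real \<Rightarrow>
                  'a \<Rightarrow> 'a \<Rightarrow> real" where
  "delta_bar P obs c x y = (SUP n. delta P obs c n x y)"

end

theory Submission
  imports Defs
begin

lemma coupling_prod:
  fixes \<mu> \<nu> :: "'a::second_countable_topology measure"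
  assumes "prob_space \<mu>" "sets \<mu> = sets borel" "prob_space \<nu>" "sets \<nu> = sets borel"
  shows "\<mu> \<Otimes>\<^sub>M \<nu> \<in> couplings \<mu> \<nu>"
proof -
  interpret pp: pair_prob_space \<mu> \<nu>
    using assms by (simp add: pair_prob_space_def pair_sigma_finite_def prob_space_imp_sigma_finite)
  have sets: "sets (\<mu> \<Otimes>\<^sub>M \<nu>) = sets (borel :: ('a \<times> 'a) measure)"
    proof -
    have "sets (\<mu> \<Otimes>\<^sub>M \<nu>) = sets (borel \<Otimes>\<^sub>M (borel::'a measure))"
      by (rule sets_pair_measure_cong) (use assms in auto)
    also have "\<dots> = sets (borel :: ('a \<times> 'a) measure)" by (simp only: borel_prod)
    finally show ?thesis .
  qed
  have "distr (\<mu> \<Otimes>\<^sub>M \<nu>) borel fst = distr (\<mu> \<Otimes>\<^sub>M \<nu>) \<mu> fst"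
    by (rule distr_cong) (use assms in auto)
  also have "\<dots> = \<mu>" using pp.M2.distr_pair_fst .
  finally have f: "distr (\<mu> \<Otimes>\<^sub>M \<nu>) borel fst = \<mu>" .
  have "distr (\<mu> \<Otimes>\<^sub>M \<nu>) borel snd = distr (\<mu> \<Otimes>\<^sub>M \<nu>) \<nu> snd"
    by (rule distr_cong) (use assms in auto)
  also have "\<dots> = \<nu>"
  proof (intro measure_eqI)
    fix A assume A: "A \<in> sets (distr (\<mu> \<Otimes>\<^sub>M \<nu>) \<nu> snd)"
    from A have "emeasure (distr (\<mu> \<Otimes>\<^sub>M \<nu>) \<nu> snd) A = emeasure (\<mu> \<Otimes>\<^sub>M \<nu>) (space \<mu> \<times> A)"
      by (auto simp add: emeasure_distr space_pair_measure dest: sets.sets_into_space intro!: arg_cong2[where f=emeasure])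
    with A show "emeasure (distr (\<mu> \<Otimes>\<^sub>M \<nu>) \<nu> snd) A = emeasure \<nu> A"
      using pp.M2.emeasure_pair_measure_Times[where N=\<mu> and A="space \<mu>" and B=A] pp.M1.emeasure_space_1
      by (simp add: A sets.top)
  qed simp
  finally have s: "distr (\<mu> \<Otimes>\<^sub>M \<nu>) borel snd = \<nu>" .
  show ?thesis unfolding couplings_def using sets f s pp.prob_space_axioms by auto
qed

lemma lsc_meas:
  fixes m :: "'a::second_countable_topology \<Rightarrow> 'a \<Rightarrow> real"
  assumes "m \<in> lsc_pseudometrics" "sets \<gamma> = sets (borel :: ('a \<times> 'a) measure)"
  shows "(\<lambda>p. m (fst p) (snd p)) \<in> borel_measurable \<gamma>"
proof -
  have "(\<lambda>p. m (fst p) (snd p)) \<in> borel_measurable (borel :: ('a \<times> 'a) measure)"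
    unfolding borel_measurable_iff_greater
    using assms(1) unfolding lsc_pseudometrics_def lsc_def by auto
  then show ?thesis using measurable_cong_sets[OF assms(2) refl] by blast
qed

lemma W_bounds:
  fixes m d :: "'a::second_countable_topology \<Rightarrow> 'a \<Rightarrow> real"
  assumes ne: "couplings \<mu> \<nu> \<noteq> {}" and m: "m \<in> lsc_pseudometrics"
    and d0: "\<forall>x y. 0 \<le> d x y" and dm: "\<forall>x y. d x y \<le> m x y"
  shows "0 \<le> W d \<mu> \<nu> \<and> W d \<mu> \<nu> \<le> W m \<mu> \<nu> \<and> W m \<mu> \<nu> \<le> 1"
proof -
  have m01: "\<forall>x y. 0 \<le> m x y \<and> m x y \<le> 1"
    using m unfolding lsc_pseudometrics_def pseudometrics1_def by auto
  have I: "0 \<le> (\<integral>p. d (fst p) (snd p) \<partial>\<gamma>) \<and>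
      (\<integral>p. d (fst p) (snd p) \<partial>\<gamma>) \<le> (\<integral>p. m (fst p) (snd p) \<partial>\<gamma>) \<and>
      (\<integral>p. m (fst p) (snd p) \<partial>\<gamma>) \<le> 1" if g: "\<gamma> \<in> couplings \<mu> \<nu>" for \<gamma>
  proof -
    from g have ps: "prob_space \<gamma>" and sg: "sets \<gamma> = sets (borel :: ('a \<times> 'a) measure)"
      unfolding couplings_def by auto
    interpret prob_space \<gamma> by fact
    have meas: "(\<lambda>p. m (fst p) (snd p)) \<in> borel_measurable \<gamma>" using lsc_meas[OF m sg] .
    have int: "integrable \<gamma> (\<lambda>p. m (fst p) (snd p))"
      by (rule integrable_const_bound[where B=1]) (use m01 meas in auto)
    have a: "0 \<le> (\<integral>p. d (fst p) (snd p) \<partial>\<gamma>)" by (rule Bochner_Integration.integral_nonneg) (use d0 in auto)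
    have mn: "0 \<le> (\<integral>p. m (fst p) (snd p) \<partial>\<gamma>)" by (rule Bochner_Integration.integral_nonneg) (use m01 in auto)
    have b: "(\<integral>p. d (fst p) (snd p) \<partial>\<gamma>) \<le> (\<integral>p. m (fst p) (snd p) \<partial>\<gamma>)"
    proof (cases "integrable \<gamma> (\<lambda>p. d (fst p) (snd p))")
      case True then show ?thesis by (intro integral_mono int) (use dm in auto)
    next
      case False then show ?thesis using mn by (simp add: not_integrable_integral_eq)
    qed
    have "(\<integral>p. m (fst p) (snd p) \<partial>\<gamma>) \<le> (\<integral>p. 1 \<partial>\<gamma>)"
      by (intro integral_mono int) (use m01 in auto)
    also have "\<dots> = 1" by (simp add: prob_space)
    finally show ?thesis using a b by simp
  qed
  have bd: "bdd_below ((\<lambda>\<gamma>. \<integral>p. d (fst p) (snd p) \<partial>\<gamma>) ` couplings \<mu> \<nu>)"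
    using I by (intro bdd_belowI[where m=0]) auto
  have 1: "0 \<le> W d \<mu> \<nu>" unfolding W_def using I ne by (intro cINF_greatest) auto
  have 2: "W d \<mu> \<nu> \<le> W m \<mu> \<nu>" unfolding W_def
  proof (rule cINF_greatest[OF ne])
    fix \<gamma> assume g: "\<gamma> \<in> couplings \<mu> \<nu>"
    have "(INF \<gamma>\<in>couplings \<mu> \<nu>. \<integral>p. d (fst p) (snd p) \<partial>\<gamma>) \<le> (\<integral>p. d (fst p) (snd p) \<partial>\<gamma>)"
      by (rule cINF_lower[OF bd g])
    then show "(INF \<gamma>\<in>couplings \<mu> \<nu>. \<integral>p. d (fst p) (snd p) \<partial>\<gamma>) \<le> (\<integral>p. m (fst p) (snd p) \<partial>\<gamma>)"
      using I[OF g] by linarith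
  qed
  obtain \<gamma> where g: "\<gamma> \<in> couplings \<mu> \<nu>" using ne by auto
  have bdm: "bdd_below ((\<lambda>\<gamma>. \<integral>p. m (fst p) (snd p) \<partial>\<gamma>) ` couplings \<mu> \<nu>)"
  proof (intro bdd_belowI[where m=0])
    fix z assume "z \<in> (\<lambda>\<gamma>. \<integral>p. m (fst p) (snd p) \<partial>\<gamma>) ` couplings \<mu> \<nu>"
    then obtain \<gamma> where "\<gamma> \<in> couplings \<mu> \<nu>" "z = (\<integral>p. m (fst p) (snd p) \<partial>\<gamma>)" by auto
    then show "0 \<le> z" using I[of \<gamma>] by linarith
  qed
  have 3: "W m \<mu> \<nu> \<le> 1" unfolding W_def
    using cINF_lower[OF bdm g] I[OF g] by linarith
  show ?thesis using 1 2 3 by auto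
qed

theorem mainTheorem5:
  fixes \<Delta> :: "'a::{second_countable_topology, t2_space} \<Rightarrow> 'a \<Rightarrow> real"
    and P :: "real \<Rightarrow> 'a \<Rightarrow> 'a measure"
    and obs :: "'a \<Rightarrow> real"
    and c :: real
    and m :: "'a \<Rightarrow> 'a \<Rightarrow> real"
  assumes metric: "bounded_generating_metric \<Delta>"
    and loc_compact: "locally_compact_space (euclidean :: 'a topology)"
    and kernels: "feller_dynkin_kernels P"
    and weak_cont: "weakly_continuous_kernels P"
    and obs_cont: "continuous_on UNIV obs"
    and obs_range: "\<forall>x. 0 \<le> obs x \<and> obs x \<le> 1"
    and c_pos: "0 < c" and c_lt1: "c < 1"
    and m_P: "m \<in> lsc_pseudometrics"
    and m_fix: "Fc P c m = m"
    and m_obs: "\<forall>x y. \<bar>obs x - obs y\<bar> \<le> m x y"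
  shows "\<forall>x y. delta_bar P obs c x y \<le> m x y"
proof -
  have K: "\<forall>t\<ge>0. \<forall>x. prob_space (P t x) \<and> sets (P t x) = sets borel"
    using kernels unfolding feller_dynkin_kernels_def by (rule conjunct1)
  have ne: "couplings (P t x) (P t y) \<noteq> {}" if "t \<in> {0..}" for t x y
  proof -
    have "prob_space (P t x) \<and> sets (P t x) = sets borel" "prob_space (P t y) \<and> sets (P t y) = sets borel"
      using K that by auto
    then have "P t x \<Otimes>\<^sub>M P t y \<in> couplings (P t x) (P t y)" by (intro coupling_prod) auto
    then show ?thesis by blast
  qed
  have cp: "0 < c powr t \<and> c powr t \<le> 1" if "t \<in> {0::real..}" for t
    using that c_pos c_lt1 by (simp add: powr_le1)
  have step: "\<forall>x y. 0 \<le> Fc P c d x y \<and> Fc P c d x y \<le> m x y"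
    if d0: "\<forall>x y. 0 \<le> d x y" and dm: "\<forall>x y. d x y \<le> m x y" for d
  proof (intro allI)
    fix x y
    let ?f = "\<lambda>t. c powr t * W d (P t x) (P t y)"
    let ?g = "\<lambda>t. c powr t * W m (P t x) (P t y)"
    have fg: "0 \<le> ?f t \<and> ?f t \<le> ?g t \<and> ?g t \<le> 1" if t: "t \<in> {0..}" for t
    proof -
      have B: "0 \<le> W d (P t x) (P t y) \<and> W d (P t x) (P t y) \<le> W m (P t x) (P t y) \<and> W m (P t x) (P t y) \<le> 1"
        using W_bounds[OF ne[OF t] m_P d0 dm] .
      have C: "0 < c powr t \<and> c powr t \<le> 1" using cp[OF t] .
      have "0 \<le> c powr t * W d (P t x) (P t y)" using B C by simp
      moreover have "c powr t * W d (P t x) (P t y) \<le> c powr t * W m (P t x) (P t y)"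
        using B C by (intro mult_left_mono) auto
      moreover have "c powr t * W m (P t x) (P t y) \<le> 1"
        using B C by (intro mult_le_one) auto
      ultimately show ?thesis by blast
    qed
    have bdg: "bdd_above (?g ` {0..})"
    proof (intro bdd_aboveI[where M=1])
      fix z assume "z \<in> ?g ` {0..}"
      then obtain t where "t \<in> {0..}" "z = ?g t" by blast
      then show "z \<le> 1" using fg[of t] by linarith
    qed
    have bdf: "bdd_above (?f ` {0..})"
    proof (intro bdd_aboveI[where M=1])
      fix z assume "z \<in> ?f ` {0..}"
      then obtain t where "t \<in> {0..}" "z = ?f t" by blast
      then show "z \<le> 1" using fg[of t] by linarith
    qed
    have "0 \<le> ?f 0" using fg[of 0] by simp
    also have "\<dots> \<le> Fc P c d x y" unfolding Fc_def by (rule cSUP_upper[OF _ bdf]) simp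
    finally have a: "0 \<le> Fc P c d x y" .
    have "Fc P c d x y \<le> Fc P c m x y" unfolding Fc_def
    proof (rule cSUP_mono[OF _ bdg])
      show "{0::real..} \<noteq> {}" by simp
      fix t :: real assume "t \<in> {0..}"
      then show "\<exists>s\<in>{0..}. ?f t \<le> ?g s" using fg[of t] by blast
    qed
    then show "0 \<le> Fc P c d x y \<and> Fc P c d x y \<le> m x y" using a m_fix by simp
  qed
  have ind: "\<forall>x y. 0 \<le> delta P obs c n x y \<and> delta P obs c n x y \<le> m x y" for n
  proof (induction n)
    case 0 then show ?case using m_obs by simp
  next
    case (Suc n) then show ?case using step[of "delta P obs c n"] by simp
  qed
  show ?thesis unfolding delta_bar_def
    using ind by (auto intro!: cSUP_least)
qed

end
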